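(* Fix $p\ge1$, $\beta\in\mathbb R^p$, $\sigma^2>0$, $M\subseteq\{1,\dots,p\}$ with $|M|=m$, and $\alpha_0\in(0,1)$. Let $(X_n)$ be a fixed sequence of design matrices with $n$ rows and $p$ columns with $\frac1nX_n^\top X_n\to Q$ for some positive definite $Q$, and let $Y_n=X_n\beta+\epsilon_n$ with $\epsilon_n\sim\mathcal N(0,\sigma^2I)$. Let $W\sim\chi^2_m$, $Z_n\sim\chi^2_{n-p-1}$, $c_n=\frac{p}{n-p-1}F^{-1}_{p,n-p-1}(1-\alpha_0)$, and $d(Y_n)=-Y_n^\top P_{(X_n)_{-M}}Y_n$, with $W$, $Z_n$ and $d(Y_n)$ independent. Then there exist $\delta>0$ and $N>0$ such that $\Pr(W-c_nZ_n\ge d(Y_n)/\sigma^2)\ge\delta$ for all $n>N$.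
   Context: $P_A:=A(A^\top A)^{-1}A^\top$; $A_{-M}$ is $A$ with the columns indexed by $M$ removed; $F_{a,b}$ is the CDF of the $F_{a,b}$ distribution. *)

theory Defs
  imports "HOL-Probability.Probability" "Jordan_Normal_Form.Gauss_Jordan_Elimination"
begin

definition chi_sq_density :: "nat \<Rightarrow> real \<Rightarrow> real" where
  "chi_sq_density k x = (if x > 0 then
     x powr (real k / 2 - 1) * exp (- x / 2) / (2 powr (real k / 2) * Gamma (real k / 2))
   else 0)"

definition chi_sq_measure :: "nat \<Rightarrow> real measure" where
  "chi_sq_measure k = (if k = 0 then return borel 0 else density lborel (chi_sq_density k))"

definition F_density :: "nat \<Rightarrow> nat \<Rightarrow> real \<Rightarrow> real" where
  "F_density a b x = (if x > 0 then
     Gamma ((real a + real b) / 2) / (Gamma (real a / 2) * Gamma (real b / 2))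
     * (real a / real b) powr (real a / 2) * x powr (real a / 2 - 1)
     * (1 + real a * x / real b) powr (- (real a + real b) / 2)
   else 0)"

definition F_cdf :: "nat \<Rightarrow> nat \<Rightarrow> real \<Rightarrow> real" where
  "F_cdf a b = cdf (density lborel (F_density a b))"

definition F_quantile :: "nat \<Rightarrow> nat \<Rightarrow> real \<Rightarrow> real" where
  "F_quantile a b q = Inf {x. q \<le> F_cdf a b x}"

definition proj_mat :: "real mat \<Rightarrow> real mat" where
  "proj_mat A = A * the (mat_inverse (A\<^sup>T * A)) * A\<^sup>T"

text \<open>A with the columns indexed by M removed (columns indexed 0..dim_col A - 1,
  remaining columns kept in their original order).\<close>
definition drop_cols :: "real mat \<Rightarrow> nat set \<Rightarrow> real mat" where
  "drop_cols A M = mat_of_cols (dim_row A) (map (col A) (filter (\<lambda>j. j \<notin> M) [0..<dim_col A]))"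

definition pos_def_mat :: "real mat \<Rightarrow> bool" where
  "pos_def_mat Q \<longleftrightarrow> Q\<^sup>T = Q \<and>
     (\<forall>x \<in> carrier_vec (dim_row Q). x \<noteq> 0\<^sub>v (dim_row Q) \<longrightarrow> x \<bullet> (Q *\<^sub>v x) > 0)"

end

theory Submission
  imports Defs "Jordan_Normal_Form.Determinant" "HOL-Real_Asymp.Real_Asymp"
begin

lemma Gamma_shift_lower:
  fixes z h :: real
  assumes z: "z > 1" and h: "h > 0"
  shows "Gamma (z + h) \<ge> Gamma z * (z - 1) powr h"
proof -
  define y where "y = z - 1"
  define H where "H = h + 1"
  have y: "y > 0" using z y_def by simp
  have H: "H > 1" using h H_def by simp
  let ?f = "ln \<circ> Gamma :: real \<Rightarrow> real"
  have cv: "?f ((1 - 1/H) *\<^sub>R y + (1/H) *\<^sub>R (y + H)) \<le> (1 - 1/H) * ?f y + (1/H) * ?f (y + H)"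
    by (rule convex_onD[OF log_convex_Gamma_real]) (use y H in auto)
  have e: "(1 - 1/H) *\<^sub>R y + (1/H) *\<^sub>R (y + H) = y + 1" using H by (simp add: field_simps)
  have g1: "Gamma (y + 1) = y * Gamma y" using y by (intro Gamma_plus1) (auto elim!: nonpos_Ints_cases)
  have gp: "Gamma y > 0" "Gamma (y + H) > 0" using y H by auto
  have "ln (y * Gamma y) \<le> (1 - 1/H) * ln (Gamma y) + (1/H) * ln (Gamma (y + H))"
    using cv e g1 by simp
  hence "ln y + ln (Gamma y) \<le> (1 - 1/H) * ln (Gamma y) + (1/H) * ln (Gamma (y + H))"
    using y gp by (simp add: ln_mult)
  hence "H * ln y + ln (Gamma y) \<le> ln (Gamma (y + H))"
    using H by (simp add: field_simps)
  hence "exp (H * ln y + ln (Gamma y)) \<le> Gamma (y + H)"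
    using gp by (metis exp_le_cancel_iff exp_ln)
  hence A: "y powr H * Gamma y \<le> Gamma (y + H)"
    using y gp by (simp add: exp_add powr_def mult.commute)
  have "y powr H = y powr h * y" using y by (simp add: H_def powr_add)
  hence "y powr H * Gamma y = Gamma (y + 1) * y powr h" using g1 by (simp add: ac_simps)
  hence "y powr H * Gamma y = Gamma z * (z - 1) powr h" by (simp add: y_def)
  moreover have "y + H = z + h" by (simp add: y_def H_def)
  ultimately show ?thesis using A by simp
qed

lemma nn_integral_gamma_kernel:
  fixes s l :: real
  assumes s: "s > 0" and l: "l > 0"
  shows "(\<integral>\<^sup>+x. ennreal (indicator {0<..} x * x powr (s - 1) * exp (- (l * x))) \<partial>lborel)
         = ennreal (Gamma s / l powr s)"
proof -
  define f where "f = (\<lambda>t::real. ennreal (indicator {0..} t * t powr (s - 1) / exp t))"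
  have fm: "f \<in> borel_measurable borel" unfolding f_def by measurable
  have "ennreal (Gamma s) = (\<integral>\<^sup>+x. f x \<partial>lborel)"
    using Gamma_conv_nn_integral_real[OF s] by (simp add: f_def)
  also have "\<dots> = ennreal l * (\<integral>\<^sup>+x. f (0 + l * x) \<partial>lborel)"
    using nn_integral_real_affine[OF fm, of l 0] l by simp
  also have "(\<lambda>x. f (0 + l * x)) = (\<lambda>x. ennreal (l powr (s - 1)) *
      ennreal (indicator {0<..} x * x powr (s - 1) * exp (- (l * x))))"
  proof
    fix x :: real
    show "f (0 + l * x) = ennreal (l powr (s - 1)) *
      ennreal (indicator {0<..} x * x powr (s - 1) * exp (- (l * x)))"
    proof (cases "x > 0")
      case True
      then show ?thesis using l
        by (simp add: f_def powr_mult exp_minus field_simps ennreal_mult'[symmetric] indicator_def)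
    next
      case False
      then show ?thesis using l
        by (auto simp: f_def indicator_def zero_le_mult_iff)
    qed
  qed
  also have "(\<integral>\<^sup>+x. ennreal (l powr (s - 1)) *
      ennreal (indicator {0<..} x * x powr (s - 1) * exp (- (l * x))) \<partial>lborel)
      = ennreal (l powr (s - 1)) * (\<integral>\<^sup>+x. ennreal (indicator {0<..} x * x powr (s - 1) * exp (- (l * x))) \<partial>lborel)"
    by (rule nn_integral_cmult) measurable
  finally have "ennreal (Gamma s) = ennreal (l * l powr (s - 1)) * (\<integral>\<^sup>+x. ennreal (indicator {0<..} x * x powr (s - 1) * exp (- (l * x))) \<partial>lborel)"
    using l by (simp add: ennreal_mult' mult.assoc)
  moreover have "l * l powr (s - 1) = l powr s" using l by (simp add: powr_diff)
  ultimately have E: "ennreal (Gamma s) = ennreal (l powr s) * (\<integral>\<^sup>+x. ennreal (indicator {0<..} x * x powr (s - 1) * exp (- (l * x))) \<partial>lborel)"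
    by simp
  have lp: "l powr s > 0" using l by simp
  have "ennreal (Gamma s / l powr s) = ennreal (Gamma s) / ennreal (l powr s)"
    using lp s by (simp add: divide_ennreal)
  also have "\<dots> = (\<integral>\<^sup>+x. ennreal (indicator {0<..} x * x powr (s - 1) * exp (- (l * x))) \<partial>lborel)"
    unfolding E by (subst mult.commute, rule ennreal_mult_divide_eq) (use lp in auto)
  finally show ?thesis by simp
qed


lemma chi_sq_density_nonneg: "chi_sq_density k x \<ge> 0"
proof -
  have "Gamma (real k / 2) \<ge> 0" by (cases "k = 0") (auto intro: less_imp_le Gamma_real_pos)
  thus ?thesis unfolding chi_sq_density_def by (auto intro!: divide_nonneg_nonneg)
qed

lemma chi_sq_density_measurable[measurable]: "chi_sq_density k \<in> borel_measurable borel"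
  unfolding chi_sq_density_def by measurable

lemma chi_sq_mean:
  assumes k: "k \<ge> 1"
  shows "(\<integral>\<^sup>+x. ennreal (chi_sq_density k x * x) \<partial>lborel) = ennreal (real k)"
proof -
  define c where "c = 2 powr (real k / 2) * Gamma (real k / 2)"
  have c: "c > 0" unfolding c_def using k by auto
  have gp: "Gamma (real k / 2) > 0" using k by (intro Gamma_real_pos) simp
  have eq: "(\<lambda>x. ennreal (chi_sq_density k x * x)) = (\<lambda>x. ennreal (1 / c) *
     ennreal (indicator {0<..} x * x powr ((real k / 2 + 1) - 1) * exp (- ((1/2) * x))))"
  proof
    fix x :: real
    show "ennreal (chi_sq_density k x * x) = ennreal (1 / c) *
     ennreal (indicator {0<..} x * x powr ((real k / 2 + 1) - 1) * exp (- ((1/2) * x)))"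
    proof (cases "x > 0")
      case True
      then have "x powr (real k / 2 - 1) * x = x powr (real k / 2 - 1 + 1)"
        using powr_add[of x "real k / 2 - 1" 1] by simp
      then have "x powr ((real k / 2 + 1) - 1) = x powr (real k / 2 - 1) * x"
        by simp
      then show ?thesis using True c
        by (simp add: chi_sq_density_def ennreal_mult'[symmetric] c_def)
    qed (auto simp: chi_sq_density_def)
  qed
  have "(\<integral>\<^sup>+x. ennreal (chi_sq_density k x * x) \<partial>lborel) =
     ennreal (1 / c) * (\<integral>\<^sup>+x. ennreal (indicator {0<..} x * x powr ((real k / 2 + 1) - 1) * exp (- ((1/2) * x))) \<partial>lborel)"
    unfolding eq by (rule nn_integral_cmult) measurable
  also have "\<dots> = ennreal (1 / c) * ennreal (Gamma (real k / 2 + 1) / (1/2) powr (real k / 2 + 1))"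
    by (subst nn_integral_gamma_kernel) auto
  also have "Gamma (real k / 2 + 1) = (real k / 2) * Gamma (real k / 2)"
    using k by (intro Gamma_plus1) (auto elim!: nonpos_Ints_cases)
  also have "(1/2::real) powr (real k / 2 + 1) = 1 / (2 powr (real k / 2) * 2)"
    by (simp add: powr_add powr_divide)
  also have "ennreal (1 / c) * ennreal (real k / 2 * Gamma (real k / 2) / (1 / (2 powr (real k / 2) * 2)))
      = ennreal (1 / c * (real k / 2 * Gamma (real k / 2) / (1 / (2 powr (real k / 2) * 2))))"
    using c gp by (subst ennreal_mult) auto
  also have "1 / c * (real k / 2 * Gamma (real k / 2) / (1 / (2 powr (real k / 2) * 2))) = real k"
    using gp unfolding c_def by (simp add: field_simps)
  finally show ?thesis .
qed

lemma chi_sq_half: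
  assumes k: "k \<ge> 1" and P: "prob_space (chi_sq_measure k)"
  shows "measure (chi_sq_measure k) {0..2 * real k} \<ge> 1/2"
proof -
  interpret P: prob_space "chi_sq_measure k" by (rule P)
  have Mdef: "chi_sq_measure k = density lborel (\<lambda>x. ennreal (chi_sq_density k x))"
    using k by (simp add: chi_sq_measure_def)
  have sp: "space (chi_sq_measure k) = UNIV" by (simp add: Mdef)
  have sets: "sets (chi_sq_measure k) = sets borel" by (simp add: Mdef)
  have "emeasure (chi_sq_measure k) {2 * real k<..} =
      (\<integral>\<^sup>+x. ennreal (chi_sq_density k x) * indicator {2 * real k<..} x \<partial>lborel)"
    unfolding Mdef by (rule emeasure_density) auto
  also have "\<dots> \<le> (\<integral>\<^sup>+x. ennreal (1 / (2 * real k)) * ennreal (chi_sq_density k x * x) \<partial>lborel)"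
  proof (rule nn_integral_mono)
    fix x :: real
    show "ennreal (chi_sq_density k x) * indicator {2 * real k<..} x
          \<le> ennreal (1 / (2 * real k)) * ennreal (chi_sq_density k x * x)"
    proof (cases "x > 2 * real k")
      case True
      have "chi_sq_density k x * 1 \<le> chi_sq_density k x * (x / (2 * real k))"
        using True k chi_sq_density_nonneg[of k x] by (intro mult_left_mono) auto
      then show ?thesis using True k chi_sq_density_nonneg[of k x]
        by (simp add: ennreal_mult'[symmetric] ennreal_leI field_simps)
    qed auto
  qed
  also have "\<dots> = ennreal (1 / (2 * real k)) * ennreal (real k)"
    by (subst nn_integral_cmult) (auto simp: chi_sq_mean[OF k])
  also have "\<dots> = ennreal (1/2)" using k by (simp add: ennreal_mult'[symmetric])
  finally have e1: "emeasure (chi_sq_measure k) {2 * real k<..} \<le> ennreal (1/2)" .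
  have m1: "measure (chi_sq_measure k) {2 * real k<..} \<le> 1/2"
    unfolding measure_def by (rule enn2real_leI) (use e1 in auto)
  have "emeasure (chi_sq_measure k) {..<0} =
      (\<integral>\<^sup>+x. ennreal (chi_sq_density k x) * indicator {..<0} x \<partial>lborel)"
    unfolding Mdef by (rule emeasure_density) auto
  also have "\<dots> = (\<integral>\<^sup>+x. 0 \<partial>(lborel::real measure))"
    by (intro nn_integral_cong) (auto simp: chi_sq_density_def indicator_def)
  finally have m0: "measure (chi_sq_measure k) {..<0} = 0" by (simp add: measure_def)
  have "measure (chi_sq_measure k) ({..<0} \<union> {2 * real k<..}) \<le>
        measure (chi_sq_measure k) {..<0} + measure (chi_sq_measure k) {2 * real k<..}"
    by (rule measure_Un_le) (auto simp: sets)
  hence mU: "measure (chi_sq_measure k) ({..<0} \<union> {2 * real k<..}) \<le> 1/2" using m0 m1 by simp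
  have "UNIV - ({..<0} \<union> {2 * real k<..}) = {0..2 * real k}" by auto
  hence "measure (chi_sq_measure k) {0..2 * real k} = 1 - measure (chi_sq_measure k) ({..<0} \<union> {2 * real k<..})"
    using P.prob_compl[of "{..<0} \<union> {2 * real k<..}"] by (simp add: sp sets)
  thus ?thesis using mU by simp
qed

lemma nn_integral_pos_tail:
  fixes f :: "real \<Rightarrow> real" and t s :: real
  assumes fm[measurable]: "f \<in> borel_measurable borel" and pos: "\<And>x. x > t \<Longrightarrow> x > s \<Longrightarrow> f x > 0"
  shows "0 < (\<integral>\<^sup>+x. ennreal (f x) * indicator {t..} x \<partial>lborel)"
proof (rule ccontr)
  assume "\<not> 0 < (\<integral>\<^sup>+x. ennreal (f x) * indicator {t..} x \<partial>lborel)"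
  hence "(\<integral>\<^sup>+x. ennreal (f x) * indicator {t..} x \<partial>lborel) = 0" by (simp add: not_less)
  hence AE: "AE x in lborel. ennreal (f x) * indicator {t..} x = 0"
    by (subst (asm) nn_integral_0_iff_AE) auto
  define N where "N = {x\<in>space lborel. \<not> (ennreal (f x) * indicator {t..} x = 0)}"
  have N: "N \<in> sets lborel" unfolding N_def by measurable
  have iff: "(AE x in lborel. ennreal (f x) * indicator {t..} x = 0) \<longleftrightarrow> emeasure lborel N = 0"
    by (rule AE_iff_measurable[OF N]) (simp add: N_def)
  have "emeasure lborel N = 0" using AE iff by simp
  moreover have "{max t s<..<max t s + 1} \<subseteq> N"
    using pos unfolding N_def by (force simp: indicator_def)
  ultimately have "emeasure lborel {max t s<..<max t s + 1} \<le> 0"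
    using emeasure_mono[of "{max t s<..<max t s + 1}" N lborel] N by simp
  thus False by simp
qed

lemma measure_density_pos_tail:
  fixes f :: "real \<Rightarrow> real" and t s :: real
  assumes fm[measurable]: "f \<in> borel_measurable borel" and pos: "\<And>x. x > t \<Longrightarrow> x > s \<Longrightarrow> f x > 0"
    and P: "prob_space (density lborel (\<lambda>x. ennreal (f x)))"
  shows "measure (density lborel (\<lambda>x. ennreal (f x))) {t..} > 0"
proof -
  interpret P: prob_space "density lborel (\<lambda>x. ennreal (f x))" by (rule P)
  have e: "emeasure (density lborel (\<lambda>x. ennreal (f x))) {t..} = (\<integral>\<^sup>+x. ennreal (f x) * indicator {t..} x \<partial>lborel)"
    by (rule emeasure_density) auto
  have "emeasure (density lborel (\<lambda>x. ennreal (f x))) {t..} < (\<infinity>::ennreal)"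
    using P.emeasure_finite[of "{t..}"] by (simp add: less_top[symmetric])
  thus ?thesis unfolding measure_def e
    using nn_integral_pos_tail[OF fm pos] by (simp add: enn2real_positive_iff)
qed

lemma Gamma_half_nonneg: "Gamma (real k / 2) \<ge> 0"
  by (cases "k = 0") (auto intro: less_imp_le Gamma_real_pos)

lemma F_density_nonneg: "F_density a b x \<ge> 0"
proof -
  have "Gamma ((real a + real b) / 2) \<ge> 0" using Gamma_half_nonneg[of "a + b"] by simp
  thus ?thesis using Gamma_half_nonneg[of a] Gamma_half_nonneg[of b]
    unfolding F_density_def by (auto intro!: mult_nonneg_nonneg divide_nonneg_nonneg)
qed

lemma F_density_measurable[measurable]: "F_density a b \<in> borel_measurable borel"
  unfolding F_density_def by measurable

definition Lb :: "nat \<Rightarrow> nat \<Rightarrow> real \<Rightarrow> real" where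
  "Lb a b x = indicator {0<..} x * (x powr (real a / 2 - 1) *
     (1 + real a * x / real b) powr (- (real a + real b) / 2) *
     ((real a / 2) powr (real a / 2) / Gamma (real a / 2)) *
     ((real b / 2 - 1) / (real b / 2)) powr (real a / 2))"

lemma Lb_measurable[measurable]: "Lb a b \<in> borel_measurable borel"
  unfolding Lb_def by measurable

definition gF :: "nat \<Rightarrow> real \<Rightarrow> real" where
  "gF a x = ((real a / 2) powr (real a / 2) / Gamma (real a / 2)) *
     (indicator {0<..} x * x powr (real a / 2 - 1) * exp (- ((real a / 2) * x)))"

lemma gF_measurable[measurable]: "gF a \<in> borel_measurable borel"
  unfolding gF_def by measurable

lemma alg:
  fixes A G Gh z h :: real
  assumes "A > 0" "G > 0" "Gh > 0" "z > 1"
  shows "A powr h / Gh * ((z - 1) / z) powr h = (G * (z - 1) powr h) / (Gh * G) * (A / z) powr h"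
proof -
  have e1: "((z - 1) / z) powr h = (z - 1) powr h / z powr h" using assms by (simp add: powr_divide)
  have e2: "(A / z) powr h = A powr h / z powr h" using assms by (simp add: powr_divide)
  have zp: "z powr h > 0" using assms by simp
  show ?thesis unfolding e1 e2 using assms zp by (simp add: field_simps)
qed

lemma F_density_ge_Lb:
  assumes a: "a \<ge> 1" and b: "b > 2"
  shows "Lb a b x \<le> F_density a b x"
proof (cases "x > 0")
  case False
  then show ?thesis using F_density_nonneg[of a b x] by (simp add: Lb_def)
next
  case True
  define z where "z = real b / 2"
  define h where "h = real a / 2"
  have z: "z > 1" using b by (simp add: z_def)
  have h: "h > 0" using a by (simp add: h_def)
  define X where "X = x powr (h - 1) * (1 + real a * x / real b) powr (- (real a + real b) / 2)"
  have X: "X \<ge> 0" by (simp add: X_def)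
  have gz: "Gamma z > 0" "Gamma h > 0" using z h by auto
  have gz0: "Gamma z \<noteq> 0" "Gamma h \<noteq> 0" using gz by auto
  have Gl: "Gamma (z + h) \<ge> Gamma z * (z - 1) powr h" by (rule Gamma_shift_lower[OF z h])
  have ab: "real a / real b = (real a / 2) / z" by (simp add: z_def)
  have key: "(real a / 2) powr h / Gamma h * ((z - 1) / z) powr h
        \<le> Gamma (z + h) / (Gamma h * Gamma z) * (real a / real b) powr h"
  proof -
    have "(real a / 2) powr h / Gamma h * ((z - 1) / z) powr h
        = (Gamma z * (z - 1) powr h) / (Gamma h * Gamma z) * (real a / real b) powr h"
      unfolding ab by (rule alg) (use gz z a in auto)
    also have "\<dots> \<le> Gamma (z + h) / (Gamma h * Gamma z) * (real a / real b) powr h"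
      using Gl gz by (intro mult_right_mono divide_right_mono) auto
    finally show ?thesis .
  qed
  have "Lb a b x = X * ((real a / 2) powr h / Gamma h * ((z - 1) / z) powr h)"
    using True by (simp add: Lb_def X_def z_def h_def)
  also have "\<dots> \<le> X * (Gamma (z + h) / (Gamma h * Gamma z) * (real a / real b) powr h)"
    by (rule mult_left_mono[OF key X])
  also have "\<dots> = F_density a b x"
    using True by (simp add: F_density_def X_def z_def h_def add_divide_distrib ac_simps)
  finally show ?thesis .
qed

lemma Lb_tendsto:
  assumes a: "a \<ge> 1"
  shows "((\<lambda>b. Lb a b x) \<longlongrightarrow> gF a x) sequentially"
proof (cases "x > 0")
  case False
  then show ?thesis by (simp add: Lb_def gF_def)
next
  case True
  define c where "c = real a * x"
  have c: "c > 0" using a True by (simp add: c_def)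
  have ha: "real a / 2 > 0" using a by simp
  have t1: "((\<lambda>b::nat. (1 + c / real b) powr (-(real a + real b)/2)) \<longlongrightarrow> exp (-c/2)) sequentially"
    using c ha by real_asymp
  have t2: "((\<lambda>b::nat. ((real b / 2 - 1) / (real b / 2)) powr (real a / 2)) \<longlongrightarrow> 1) sequentially"
    using ha by real_asymp
  have "((\<lambda>b. 1 * (x powr (real a / 2 - 1) * (1 + c / real b) powr (-(real a + real b)/2) *
       ((real a / 2) powr (real a / 2) / Gamma (real a / 2)) *
       ((real b / 2 - 1) / (real b / 2)) powr (real a / 2)))
     \<longlongrightarrow> 1 * (x powr (real a / 2 - 1) * exp (-c/2) * ((real a / 2) powr (real a / 2) / Gamma (real a / 2)) * 1)) sequentially"
    by (intro tendsto_intros t1 t2)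
  moreover have "1 * (x powr (real a / 2 - 1) * exp (-c/2) * ((real a / 2) powr (real a / 2) / Gamma (real a / 2)) * 1) = gF a x"
    using True by (simp add: gF_def c_def)
  moreover have "(\<lambda>b. 1 * (x powr (real a / 2 - 1) * (1 + c / real b) powr (-(real a + real b)/2) *
       ((real a / 2) powr (real a / 2) / Gamma (real a / 2)) *
       ((real b / 2 - 1) / (real b / 2)) powr (real a / 2))) = (\<lambda>b. Lb a b x)"
    using True by (simp add: Lb_def c_def)
  ultimately show ?thesis by simp
qed

lemma gF_total:
  assumes a: "a \<ge> 1"
  shows "(\<integral>\<^sup>+x. ennreal (gF a x) \<partial>lborel) = 1"
proof -
  have ha: "real a / 2 > 0" using a by simp
  have G0: "Gamma (real a / 2) \<noteq> 0" using Gamma_real_pos[OF ha] by simp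
  have "(\<integral>\<^sup>+x. ennreal (gF a x) \<partial>lborel) = ennreal ((real a / 2) powr (real a / 2) / Gamma (real a / 2)) *
     (\<integral>\<^sup>+x. ennreal (indicator {0<..} x * x powr (real a / 2 - 1) * exp (- ((real a / 2) * x))) \<partial>lborel)"
    unfolding gF_def using ha
    by (subst ennreal_mult) (auto intro!: nn_integral_cmult)
  also have "\<dots> = ennreal ((real a / 2) powr (real a / 2) / Gamma (real a / 2)) *
      ennreal (Gamma (real a / 2) / (real a / 2) powr (real a / 2))"
    using ha by (subst nn_integral_gamma_kernel) auto
  also have "\<dots> = 1" using ha G0 by (simp add: ennreal_mult[symmetric])
  finally show ?thesis .
qed


lemma F_cdf_eq: "F_cdf a b x = enn2real (\<integral>\<^sup>+t. ennreal (F_density a b t) * indicator {..x} t \<partial>lborel)"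
  unfolding F_cdf_def cdf_def2 measure_def by (subst emeasure_density) auto

lemma F_cdf_neg: "x < 0 \<Longrightarrow> F_cdf a b x = 0"
proof -
  assume x: "x < 0"
  have "(\<integral>\<^sup>+t. ennreal (F_density a b t) * indicator {..x} t \<partial>lborel) = (\<integral>\<^sup>+t. 0 \<partial>(lborel::real measure))"
    using x by (intro nn_integral_cong) (auto simp: F_density_def indicator_def)
  thus ?thesis by (simp add: F_cdf_eq)
qed

lemma F_int_finite:
  assumes a: "a \<ge> 1" and C: "C \<ge> 0"
  shows "(\<integral>\<^sup>+t. ennreal (F_density a b t) * indicator {..C} t \<partial>lborel) < \<infinity>"
proof -
  define h where "h = real a / 2"
  have h: "h > 0" using a by (simp add: h_def)
  define K where "K = Gamma ((real a + real b) / 2) / (Gamma (real a / 2) * Gamma (real b / 2)) * (real a / real b) powr (real a / 2)"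
  have K: "K \<ge> 0" unfolding K_def using Gamma_half_nonneg[of "a + b"] Gamma_half_nonneg[of a] Gamma_half_nonneg[of b]
    by (auto intro!: mult_nonneg_nonneg divide_nonneg_nonneg)
  have I: "(\<integral>\<^sup>+t. ennreal (indicator {0..C} t * t powr (h - 1)) \<partial>lborel) = ennreal (C powr (h - 1 + 1) / (h - 1 + 1))"
    by (rule nn_integral_has_integral_lebesgue) (use has_integral_powr_from_0[of "h - 1" C] h C in auto)
  have "(\<integral>\<^sup>+t. ennreal (F_density a b t) * indicator {..C} t \<partial>lborel)
      \<le> (\<integral>\<^sup>+t. ennreal K * ennreal (indicator {0..C} t * t powr (h - 1)) \<partial>lborel)"
  proof (intro nn_integral_mono)
    fix t :: real
    show "ennreal (F_density a b t) * indicator {..C} t \<le> ennreal K * ennreal (indicator {0..C} t * t powr (h - 1))"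
    proof (cases "t > 0 \<and> t \<le> C")
      case True
      have p1: "(1 + real a * t / real b) powr (- (real a + real b) / 2) \<le> 1"
      proof -
        have "1 \<le> (1 + real a * t / real b) powr ((real a + real b) / 2)"
          using True by (intro ge_one_powr_ge_zero) auto
        hence "inverse ((1 + real a * t / real b) powr ((real a + real b) / 2)) \<le> 1"
          by (simp add: inverse_le_1_iff)
        moreover have "(1 + real a * t / real b) powr (- (real a + real b) / 2)
            = inverse ((1 + real a * t / real b) powr ((real a + real b) / 2))"
          using powr_minus[of "1 + real a * t / real b" "(real a + real b) / 2"]
          by (simp only: minus_divide_left)
        ultimately show ?thesis by simp
      qed
      have "F_density a b t = K * t powr (h - 1) * (1 + real a * t / real b) powr (- (real a + real b) / 2)"
        using True by (simp add: F_density_def K_def h_def)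
      also have "\<dots> \<le> K * t powr (h - 1) * 1"
        using K p1 by (intro mult_left_mono) auto
      finally show ?thesis using True K by (simp add: ennreal_mult'[symmetric] ennreal_leI)
    next
      case False
      then show ?thesis by (auto simp: F_density_def indicator_def)
    qed
  qed
  also have "\<dots> = ennreal K * (\<integral>\<^sup>+t. ennreal (indicator {0..C} t * t powr (h - 1)) \<partial>lborel)"
    by (rule nn_integral_cmult) measurable
  also have "\<dots> < \<infinity>" unfolding I by (simp add: ennreal_mult_less_top)
  finally show ?thesis .
qed

lemma F_quantile_bound:
  assumes a: "a \<ge> 1" and al: "0 < \<alpha>" "\<alpha> < 1"
  shows "\<exists>C. eventually (\<lambda>b. F_quantile a b (1 - \<alpha>) \<le> C) sequentially"
proof -
  define Mg where "Mg = density lborel (\<lambda>x. ennreal (gF a x))"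
  have lim: "(\<lambda>i. emeasure Mg {..real i}) \<longlonglongrightarrow> emeasure Mg (\<Union>i. {..real i})"
    by (rule Lim_emeasure_incseq) (auto simp: Mg_def incseq_def)
  have U: "(\<Union>i. {..real i}) = UNIV"
  proof (safe)
    fix x :: real
    obtain n :: nat where "x \<le> real n" using real_arch_simple by blast
    thus "x \<in> (\<Union>i. {..real i})" by auto
  qed auto
  have "emeasure Mg UNIV = (\<integral>\<^sup>+x. ennreal (gF a x) * indicator UNIV x \<partial>lborel)"
    unfolding Mg_def by (rule emeasure_density) auto
  also have "\<dots> = 1" using gF_total[OF a] by simp
  finally have tot: "emeasure Mg UNIV = 1" .
  have "ennreal (1 - \<alpha>) < 1" using al by (simp add: ennreal_lessI)
  hence "eventually (\<lambda>i. ennreal (1 - \<alpha>) < emeasure Mg {..real i}) sequentially"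
    using lim U tot by (intro order_tendstoD(1)) auto
  then obtain i0 where "ennreal (1 - \<alpha>) < emeasure Mg {..real i0}"
    by (auto simp: eventually_sequentially)
  define C where "C = real i0"
  have C0: "C \<ge> 0" by (simp add: C_def)
  have eC: "ennreal (1 - \<alpha>) < (\<integral>\<^sup>+x. ennreal (gF a x) * indicator {..C} x \<partial>lborel)"
    using \<open>ennreal (1 - \<alpha>) < emeasure Mg {..real i0}\<close>
    unfolding Mg_def C_def by (subst (asm) emeasure_density) auto
  define u where "u = (\<lambda>b x. ennreal (Lb a b x) * indicator {..C} x)"
  have liminf_u: "liminf (\<lambda>b. u b x) = ennreal (gF a x) * indicator {..C} x" for x
  proof (rule lim_imp_Liminf)
    show "((\<lambda>b. u b x) \<longlongrightarrow> ennreal (gF a x) * indicator {..C} x) sequentially"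
      unfolding u_def by (cases "x \<le> C") (auto intro!: tendsto_ennrealI Lb_tendsto[OF a])
  qed simp
  have "(\<integral>\<^sup>+x. liminf (\<lambda>b. u b x) \<partial>lborel) \<le> liminf (\<lambda>b. integral\<^sup>N lborel (u b))"
    by (rule nn_integral_liminf) (simp add: u_def)
  hence "ennreal (1 - \<alpha>) < liminf (\<lambda>b. integral\<^sup>N lborel (u b))"
    using eC liminf_u by simp
  hence ev1: "eventually (\<lambda>b. ennreal (1 - \<alpha>) < integral\<^sup>N lborel (u b)) sequentially"
    by (rule less_LiminfD)
  have ev2: "eventually (\<lambda>b. b > (2::nat)) sequentially" by (rule eventually_gt_at_top)
  have "eventually (\<lambda>b. F_quantile a b (1 - \<alpha>) \<le> C) sequentially"
    using ev1 ev2
  proof eventually_elim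
    case (elim b)
    have "integral\<^sup>N lborel (u b) \<le> (\<integral>\<^sup>+t. ennreal (F_density a b t) * indicator {..C} t \<partial>lborel)"
      unfolding u_def
      by (intro nn_integral_mono mult_right_mono ennreal_leI F_density_ge_Lb[OF a]) (use elim in auto)
    hence lt: "ennreal (1 - \<alpha>) \<le> (\<integral>\<^sup>+t. ennreal (F_density a b t) * indicator {..C} t \<partial>lborel)"
      using elim by (meson less_le_trans less_imp_le)
    have fin: "(\<integral>\<^sup>+t. ennreal (F_density a b t) * indicator {..C} t \<partial>lborel) < \<infinity>"
      by (rule F_int_finite[OF a C0])
    have "1 - \<alpha> \<le> F_cdf a b C"
      unfolding F_cdf_eq using enn2real_mono[OF lt] fin al by simp
    hence mem: "C \<in> {x. 1 - \<alpha> \<le> F_cdf a b x}" by simp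
    have bdd: "bdd_below {x. 1 - \<alpha> \<le> F_cdf a b x}"
    proof (rule bdd_belowI[of _ 0])
      fix x assume "x \<in> {x. 1 - \<alpha> \<le> F_cdf a b x}"
      thus "0 \<le> x" using F_cdf_neg[of x a b] al by (cases "x < 0") auto
    qed
    show ?case unfolding F_quantile_def by (rule cInf_lower[OF mem bdd])
  qed
  thus ?thesis by blast
qed

definition jsel :: "nat set \<Rightarrow> nat \<Rightarrow> nat list" where
  "jsel M p = filter (\<lambda>j. j \<notin> M) [0..<p]"

lemma jsel_props:
  "distinct (jsel M p)" "\<And>i. i < length (jsel M p) \<Longrightarrow> jsel M p ! i < p"
proof -
  show "distinct (jsel M p)" unfolding jsel_def by simp
  fix i assume "i < length (jsel M p)"
  hence "jsel M p ! i \<in> set (jsel M p)" by (rule nth_mem)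
  thus "jsel M p ! i < p" unfolding jsel_def by simp
qed

lemma drop_cols_carrier:
  assumes X: "X \<in> carrier_mat n p"
  shows "drop_cols X M \<in> carrier_mat n (length (jsel M p))"
  using X unfolding drop_cols_def jsel_def by auto

lemma drop_cols_col:
  assumes X: "X \<in> carrier_mat n p" and j: "j < length (jsel M p)"
  shows "col (drop_cols X M) j = col X (jsel M p ! j)"
  using X j unfolding drop_cols_def jsel_def by (subst col_mat_of_cols) auto

lemma gram_drop_cols:
  assumes X: "X \<in> carrier_mat n p" and i: "i < length (jsel M p)" and j: "j < length (jsel M p)"
  shows "((drop_cols X M)\<^sup>T * drop_cols X M) $$ (i, j) = (X\<^sup>T * X) $$ (jsel M p ! i, jsel M p ! j)"
proof -
  have A: "drop_cols X M \<in> carrier_mat n (length (jsel M p))" by (rule drop_cols_carrier[OF X])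
  have ip: "jsel M p ! i < p" "jsel M p ! j < p" using jsel_props(2) i j by auto
  show ?thesis using A X i j ip by (simp add: drop_cols_col[OF X])
qed

lemma sel_sum:
  fixes v :: "nat \<Rightarrow> real" and F :: "nat \<Rightarrow> real"
  assumes "\<And>i. i < r \<Longrightarrow> js ! i < p"
  shows "(\<Sum>a<p. (\<Sum>i<r. if js ! i = a then v i else 0) * F a) = (\<Sum>i<r. v i * F (js ! i))"
proof -
  have "(\<Sum>a<p. (\<Sum>i<r. if js ! i = a then v i else 0) * F a) = (\<Sum>a<p. \<Sum>i<r. (if js ! i = a then v i * F a else 0))"
    by (auto simp: sum_distrib_right intro!: sum.cong)
  also have "\<dots> = (\<Sum>i<r. \<Sum>a<p. (if js ! i = a then v i * F a else 0))" by (rule sum.swap)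
  also have "\<dots> = (\<Sum>i<r. v i * F (js ! i))"
    using assms by (intro sum.cong refl) (simp add: sum.delta)
  finally show ?thesis .
qed

lemma det_sub_nonzero:
  assumes Q: "Q \<in> carrier_mat p p" and pd: "pos_def_mat Q"
    and jsd: "distinct js" and jsp: "\<And>i. i < length js \<Longrightarrow> js ! i < p"
  shows "det (mat (length js) (length js) (\<lambda>(i, j). Q $$ (js ! i, js ! j))) \<noteq> (0::real)"
proof
  define r where "r = length js"
  define Q' where "Q' = mat r r (\<lambda>(i, j). Q $$ (js ! i, js ! j))"
  assume "det (mat (length js) (length js) (\<lambda>(i, j). Q $$ (js ! i, js ! j))) = 0"
  hence "det Q' = 0" by (simp add: Q'_def r_def)
  then obtain v where v: "v \<in> carrier_vec r" "v \<noteq> 0\<^sub>v r" "Q' *\<^sub>v v = 0\<^sub>v r"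
    using det_0_iff_vec_prod_zero[of Q' r] by (auto simp: Q'_def)
  have jsp': "\<And>i. i < r \<Longrightarrow> js ! i < p" using jsp r_def by auto
  define x where "x = vec p (\<lambda>a. \<Sum>i<r. if js ! i = a then v $ i else 0)"
  have x: "x \<in> carrier_vec p" by (simp add: x_def)
  have dQ: "dim_row Q = p" "dim_col Q = p" using Q by auto
  have xQx: "x \<bullet> (Q *\<^sub>v x) = v \<bullet> (Q' *\<^sub>v v)"
  proof -
    have "x \<bullet> (Q *\<^sub>v x) = (\<Sum>a<p. (\<Sum>i<r. if js ! i = a then v $ i else 0) * (Q *\<^sub>v x) $ a)"
      using x dQ by (simp add: scalar_prod_def x_def lessThan_atLeast0)
    also have "\<dots> = (\<Sum>i<r. v $ i * (Q *\<^sub>v x) $ (js ! i))"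
      by (rule sel_sum[OF jsp'])
    also have "\<dots> = (\<Sum>i<r. v $ i * (\<Sum>b<p. (\<Sum>j<r. if js ! j = b then v $ j else 0) * Q $$ (js ! i, b)))"
    proof (intro sum.cong refl)
      fix i assume i: "i \<in> {..<r}"
      have "(Q *\<^sub>v x) $ (js ! i) = row Q (js ! i) \<bullet> x" using jsp' i dQ by simp
      also have "\<dots> = (\<Sum>b<p. Q $$ (js ! i, b) * x $ b)"
        using jsp' i dQ x by (simp add: scalar_prod_def lessThan_atLeast0)
      also have "\<dots> = (\<Sum>b<p. (\<Sum>j<r. if js ! j = b then v $ j else 0) * Q $$ (js ! i, b))"
        by (simp add: x_def mult.commute)
      finally show "v $ i * (Q *\<^sub>v x) $ (js ! i) = v $ i * (\<Sum>b<p. (\<Sum>j<r. if js ! j = b then v $ j else 0) * Q $$ (js ! i, b))"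
        by simp
    qed
    also have "\<dots> = (\<Sum>i<r. v $ i * (\<Sum>j<r. v $ j * Q $$ (js ! i, js ! j)))"
      by (intro sum.cong refl arg_cong2[where f = "(*)"] sel_sum[OF jsp'])
    also have "\<dots> = v \<bullet> (Q' *\<^sub>v v)"
      using v(1) by (simp add: scalar_prod_def Q'_def lessThan_atLeast0 mult.commute)
    finally show ?thesis .
  qed
  have "x \<noteq> 0\<^sub>v p"
  proof
    assume x0: "x = 0\<^sub>v p"
    have "v = 0\<^sub>v r"
    proof (rule eq_vecI)
      fix i assume i: "i < dim_vec (0\<^sub>v r :: real vec)"
      hence ir: "i < r" by simp
      have "x $ (js ! i) = (\<Sum>j<r. if js ! j = js ! i then v $ j else 0)" using jsp' ir by (simp add: x_def)
      also have "\<dots> = (\<Sum>j<r. if j = i then v $ j else 0)"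
        using jsd ir by (intro sum.cong refl) (simp add: nth_eq_iff_index_eq r_def)
      also have "\<dots> = v $ i" using ir by simp
      finally show "v $ i = 0\<^sub>v r $ i" using x0 jsp' ir by simp
    qed (use v in simp)
    thus False using v by simp
  qed
  hence "x \<bullet> (Q *\<^sub>v x) > 0" using pd x dQ unfolding pos_def_mat_def by auto
  moreover have "v \<bullet> (Q' *\<^sub>v v) = 0" using v by simp
  ultimately show False using xQx by simp
qed

lemma det_tendsto:
  fixes G :: "nat \<Rightarrow> real mat"
  assumes G: "\<And>n. G n \<in> carrier_mat r r" and Q: "Q' \<in> carrier_mat r r"
    and lim: "\<And>i j. i < r \<Longrightarrow> j < r \<Longrightarrow> ((\<lambda>n. G n $$ (i, j)) \<longlongrightarrow> Q' $$ (i, j)) sequentially"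
  shows "((\<lambda>n. det (G n)) \<longlongrightarrow> det Q') sequentially"
proof -
  have "((\<lambda>n. \<Sum>p \<in> {p. p permutes {0..<r}}. signof p * (\<Prod>i = 0..<r. G n $$ (i, p i)))
       \<longlongrightarrow> (\<Sum>p \<in> {p. p permutes {0..<r}}. signof p * (\<Prod>i = 0..<r. Q' $$ (i, p i)))) sequentially"
  proof (intro tendsto_sum tendsto_mult tendsto_const tendsto_prod)
    fix p i assume p: "p \<in> {p. p permutes {0..<r}}" and i: "i \<in> {0..<r}"
    have pp: "p permutes {0..<r}" using p by simp
    have "p i \<in> {0..<r}" using permutes_in_image[OF pp, of i] i by simp
    thus "((\<lambda>n. G n $$ (i, p i)) \<longlongrightarrow> Q' $$ (i, p i)) sequentially" using i lim by auto
  qed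
  thus ?thesis using G Q by (simp add: det_def'[of _ r])
qed

lemma sp_sum: "(y :: real vec) \<in> carrier_vec n \<Longrightarrow> x \<bullet> y = (\<Sum>i<n. x $ i * y $ i)"
  by (simp add: scalar_prod_def lessThan_atLeast0)

lemma quad_form:
  fixes A B :: "real mat" and Y :: "real vec"
  assumes A: "A \<in> carrier_mat n r" and B: "B \<in> carrier_mat r r"
    and GB: "(A\<^sup>T * A) * B = 1\<^sub>m r" and Y: "Y \<in> carrier_vec n"
  shows "Y \<bullet> ((A * B * A\<^sup>T) *\<^sub>v Y) \<ge> 0"
    and "r > 0 \<Longrightarrow> (col A 0 \<bullet> Y)\<^sup>2 \<le> (col A 0 \<bullet> col A 0) * (Y \<bullet> ((A * B * A\<^sup>T) *\<^sub>v Y))"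
proof -
  have At: "A\<^sup>T \<in> carrier_mat r n" using A by simp
  define z where "z = A\<^sup>T *\<^sub>v Y"
  define v where "v = B *\<^sub>v z"
  have z: "z \<in> carrier_vec r" using At Y by (simp add: z_def)
  have v: "v \<in> carrier_vec r" using B z by (simp add: v_def)
  have Av: "A *\<^sub>v v \<in> carrier_vec n" using A v by simp
  have PY: "(A * B * A\<^sup>T) *\<^sub>v Y = A *\<^sub>v v"
  proof -
    have "(A * B * A\<^sup>T) *\<^sub>v Y = (A * B) *\<^sub>v (A\<^sup>T *\<^sub>v Y)"
      by (rule assoc_mult_mat_vec) (use A B At Y in auto)
    also have "\<dots> = A *\<^sub>v (B *\<^sub>v (A\<^sup>T *\<^sub>v Y))"
      by (rule assoc_mult_mat_vec) (use A B At Y in auto)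
    finally show ?thesis by (simp add: v_def z_def)
  qed
  have zG: "z = A\<^sup>T *\<^sub>v (A *\<^sub>v v)"
  proof -
    have "A\<^sup>T *\<^sub>v (A *\<^sub>v v) = (A\<^sup>T * A) *\<^sub>v v"
      by (rule assoc_mult_mat_vec[symmetric]) (use A At v in auto)
    also have "\<dots> = (A\<^sup>T * A) *\<^sub>v (B *\<^sub>v z)" by (simp add: v_def)
    also have "\<dots> = ((A\<^sup>T * A) * B) *\<^sub>v z"
      by (rule assoc_mult_mat_vec[symmetric]) (use A At B z in auto)
    also have "\<dots> = z" using GB z by simp
    finally show ?thesis by simp
  qed
  have E1: "Y \<bullet> ((A * B * A\<^sup>T) *\<^sub>v Y) = z \<bullet> v"
    unfolding PY z_def using transpose_vec_mult_scalar[OF A v Y] by simp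
  have E2: "z \<bullet> v = (A *\<^sub>v v) \<bullet> (A *\<^sub>v v)"
    unfolding zG using transpose_vec_mult_scalar[OF A v Av] by simp
  have sq: "(A *\<^sub>v v) \<bullet> (A *\<^sub>v v) = (\<Sum>i<n. ((A *\<^sub>v v) $ i)\<^sup>2)"
    unfolding sp_sum[OF Av] by (simp add: power2_eq_square)
  show "Y \<bullet> ((A * B * A\<^sup>T) *\<^sub>v Y) \<ge> 0" unfolding E1 E2 sq by (intro sum_nonneg) auto
  assume r: "r > 0"
  have w: "col A 0 \<in> carrier_vec n" using A col_dim[of A 0] by simp
  have z0: "z $ 0 = col A 0 \<bullet> Y" using A Y r by (simp add: z_def)
  have z0': "z $ 0 = col A 0 \<bullet> (A *\<^sub>v v)" using A r Av by (subst zG) simp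
  have "(col A 0 \<bullet> (A *\<^sub>v v))\<^sup>2 \<le> (col A 0 \<bullet> col A 0) * ((A *\<^sub>v v) \<bullet> (A *\<^sub>v v))"
  proof -
    have "(col A 0 \<bullet> (A *\<^sub>v v))\<^sup>2 = (\<Sum>i<n. col A 0 $ i * (A *\<^sub>v v) $ i)\<^sup>2"
      unfolding sp_sum[OF Av] ..
    also have "\<dots> \<le> (\<Sum>i<n. (col A 0 $ i)\<^sup>2) * (\<Sum>i<n. ((A *\<^sub>v v) $ i)\<^sup>2)"
      by (rule Cauchy_Schwarz_ineq_sum)
    also have "\<dots> = (col A 0 \<bullet> col A 0) * ((A *\<^sub>v v) \<bullet> (A *\<^sub>v v))"
      unfolding sp_sum[OF Av] sp_sum[OF w] by (simp add: power2_eq_square)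
    finally show ?thesis .
  qed
  thus "(col A 0 \<bullet> Y)\<^sup>2 \<le> (col A 0 \<bullet> col A 0) * (Y \<bullet> ((A * B * A\<^sup>T) *\<^sub>v Y))"
    using z0 z0' E1 E2 by simp
qed

lemma gauss_tail:
  assumes D: "distributed M lborel S (normal_density 0 \<sigma>)"
  shows "measure M {\<omega> \<in> space M. t \<le> S \<omega>} = measure (density lborel (normal_density 0 \<sigma>)) {t..}"
proof -
  have Sm: "S \<in> measurable M lborel" by (rule distributed_measurable[OF D])
  have "measure M {\<omega> \<in> space M. t \<le> S \<omega>} = measure M (S -` {t..} \<inter> space M)"
    by (intro arg_cong[where f = "measure M"]) auto
  also have "\<dots> = measure (distr M lborel S) {t..}"
    by (rule measure_distr[symmetric]) (use Sm in auto)
  also have "\<dots> = measure (density lborel (normal_density 0 \<sigma>)) {t..}"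
    by (simp add: distributed_distr_eq_density[OF D])
  finally show ?thesis .
qed

lemma gauss_event:
  fixes \<epsilon> :: "'a \<Rightarrow> nat \<Rightarrow> real" and u :: "nat \<Rightarrow> real"
  assumes P: "prob_space M" and sg: "\<sigma> > 0"
    and ind: "prob_space.indep_vars M (\<lambda>_. borel) (\<lambda>i \<omega>. \<epsilon> \<omega> i) {..<n}"
    and D: "\<And>i. i < n \<Longrightarrow> distributed M lborel (\<lambda>\<omega>. \<epsilon> \<omega> i) (normal_density 0 \<sigma>)"
    and u: "(\<Sum>i<n. (u i)\<^sup>2) = 1" and K: "K \<ge> 0"
  shows "measure M {\<omega> \<in> space M. K * \<sigma>\<^sup>2 \<le> (c + (\<Sum>i<n. u i * \<epsilon> \<omega> i))\<^sup>2}
         \<ge> measure (density lborel (normal_density 0 \<sigma>)) {\<sigma> * sqrt K..}"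
proof -
  interpret prob_space M by (rule P)
  define I where "I = {i. i < n \<and> u i \<noteq> 0}"
  have fI: "finite I" by (simp add: I_def)
  have sumI: "(\<Sum>i<n. f i) = (\<Sum>i\<in>I. f i)" if "\<And>i. i < n \<Longrightarrow> u i = 0 \<Longrightarrow> f i = 0" for f :: "nat \<Rightarrow> real"
    by (rule sum.mono_neutral_right) (use that in \<open>auto simp: I_def\<close>)
  have uI: "(\<Sum>i\<in>I. (u i)\<^sup>2) = 1" using u sumI[of "\<lambda>i. (u i)\<^sup>2"] by simp
  have Ine: "I \<noteq> {}" using uI by auto
  have indI: "indep_vars (\<lambda>_. borel) (\<lambda>i \<omega>. u i * \<epsilon> \<omega> i) I"
  proof -
    have "indep_vars (\<lambda>_. borel) (\<lambda>i \<omega>. \<epsilon> \<omega> i) I"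
      by (rule indep_vars_subset[OF ind]) (auto simp: I_def)
    hence "indep_vars (\<lambda>_. borel) (\<lambda>i \<omega>. (\<lambda>x. u i * x) (\<epsilon> \<omega> i)) I"
      by (rule indep_vars_compose2) auto
    thus ?thesis by simp
  qed
  have DI: "distributed M lborel (\<lambda>\<omega>. u i * \<epsilon> \<omega> i) (normal_density 0 (\<bar>u i\<bar> * \<sigma>))" if i: "i \<in> I" for i
    using normal_density_affine[OF D[of i] sg, of "u i" 0] i by (simp add: I_def)
  define S where "S = (\<lambda>\<omega>. \<Sum>i\<in>I. u i * \<epsilon> \<omega> i)"
  have "distributed M lborel S (normal_density (\<Sum>i\<in>I. 0) (sqrt (\<Sum>i\<in>I. (\<bar>u i\<bar> * \<sigma>)\<^sup>2)))"
    unfolding S_def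
    by (rule sum_indep_normal[OF fI Ine indI]) (use sg DI in \<open>auto simp: I_def\<close>)
  moreover have "sqrt (\<Sum>i\<in>I. (\<bar>u i\<bar> * \<sigma>)\<^sup>2) = \<sigma>"
  proof -
    have "(\<Sum>i\<in>I. (\<bar>u i\<bar> * \<sigma>)\<^sup>2) = \<sigma>\<^sup>2 * (\<Sum>i\<in>I. (u i)\<^sup>2)"
      by (simp add: power_mult_distrib sum_distrib_left mult.commute)
    thus ?thesis using uI sg by simp
  qed
  ultimately have DS: "distributed M lborel S (normal_density 0 \<sigma>)" by simp
  have DS': "distributed M lborel (\<lambda>\<omega>. 0 + (-1) * S \<omega>) (normal_density 0 \<sigma>)"
    using normal_density_affine[OF DS sg, of "-1" 0] by simp
  have Sm: "S \<in> borel_measurable M" using distributed_measurable[OF DS] by simp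
  have Seq: "(\<Sum>i<n. u i * \<epsilon> \<omega> i) = S \<omega>" for \<omega>
    unfolding S_def by (rule sumI) simp
  define E where "E = {\<omega> \<in> space M. K * \<sigma>\<^sup>2 \<le> (c + (\<Sum>i<n. u i * \<epsilon> \<omega> i))\<^sup>2}"
  have Em: "E \<in> events" unfolding E_def Seq using Sm by measurable
  have sK: "(\<sigma> * sqrt K)\<^sup>2 = K * \<sigma>\<^sup>2" using K by (simp add: power_mult_distrib)
  have sK0: "\<sigma> * sqrt K \<ge> 0" using K sg by simp
  show ?thesis
  proof (cases "c \<ge> 0")
    case True
    have "{\<omega> \<in> space M. \<sigma> * sqrt K \<le> S \<omega>} \<subseteq> E"
    proof safe
      fix \<omega> assume "\<omega> \<in> space M" "\<sigma> * sqrt K \<le> S \<omega>"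
      hence "(\<sigma> * sqrt K)\<^sup>2 \<le> (c + S \<omega>)\<^sup>2" using True sK0 by (intro power_mono) auto
      thus "\<omega> \<in> E" using \<open>\<omega> \<in> space M\<close> sK by (simp add: E_def Seq)
    qed
    hence "measure M {\<omega> \<in> space M. \<sigma> * sqrt K \<le> S \<omega>} \<le> measure M E"
      by (rule finite_measure_mono[OF _ Em])
    thus ?thesis using gauss_tail[OF DS] by (simp add: E_def)
  next
    case False
    have "{\<omega> \<in> space M. \<sigma> * sqrt K \<le> 0 + (-1) * S \<omega>} \<subseteq> E"
    proof safe
      fix \<omega> assume "\<omega> \<in> space M" "\<sigma> * sqrt K \<le> 0 + (-1) * S \<omega>"
      hence "(\<sigma> * sqrt K)\<^sup>2 \<le> (- (c + S \<omega>))\<^sup>2" using False sK0 by (intro power_mono) auto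
      hence "(\<sigma> * sqrt K)\<^sup>2 \<le> (c + S \<omega>)\<^sup>2" by (simp only: power2_minus)
      thus "\<omega> \<in> E" using \<open>\<omega> \<in> space M\<close> sK by (simp add: E_def Seq)
    qed
    hence "measure M {\<omega> \<in> space M. \<sigma> * sqrt K \<le> 0 + (-1) * S \<omega>} \<le> measure M E"
      by (rule finite_measure_mono[OF _ Em])
    thus ?thesis using gauss_tail[OF DS'] by (simp add: E_def)
  qed
qed


lemma cz_bound:
  fixes p n :: nat and q C z :: real
  assumes n: "n > p + 1" and q: "q \<le> C" and z: "0 \<le> z" "z \<le> 2 * real (n - p - 1)"
  shows "(real p / (real n - real p - 1) * q) * z \<le> 2 * real p * max C 0"
proof -
  have k: "real n - real p - 1 = real (n - p - 1)" using n by (simp add: of_nat_diff)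
  have kp: "real (n - p - 1) > 0" using n by simp
  show ?thesis
  proof (cases "q \<le> 0")
    case True
    have "real p / (real n - real p - 1) \<ge> 0" using kp k by simp
    hence "real p / (real n - real p - 1) * q \<le> 0" using True by (rule mult_nonneg_nonpos)
    hence "(real p / (real n - real p - 1) * q) * z \<le> 0" using z(1) by (rule mult_nonpos_nonneg)
    also have "0 \<le> 2 * real p * max C 0" by simp
    finally show ?thesis .
  next
    case False
    have "(real p / (real n - real p - 1) * q) * z \<le> (real p / (real n - real p - 1) * q) * (2 * real (n - p - 1))"
      using False z kp k by (intro mult_left_mono) auto
    also have "\<dots> = 2 * real p * q" using kp k by (simp add: field_simps)
    also have "\<dots> \<le> 2 * real p * max C 0" using q by (intro mult_left_mono) auto
    finally show ?thesis .
  qed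
qed

lemma mat_inverse_exists:
  fixes G :: "real mat"
  assumes G: "G \<in> carrier_mat r r" and d: "det G \<noteq> 0"
  shows "\<exists>B. mat_inverse G = Some B \<and> G * B = 1\<^sub>m r \<and> B \<in> carrier_mat r r"
proof (cases "mat_inverse G")
  case None
  have u: "G \<in> Units (ring_mat TYPE(real) r undefined)" by (rule det_non_zero_imp_unit[OF G d])
  have nu: "G \<notin> Units (ring_mat TYPE(real) r undefined)" by (rule mat_inverse(1)[OF G None])
  show ?thesis using nu u by (rule notE)
next
  case (Some B)
  thus ?thesis using mat_inverse(2)[OF G Some] by blast
qed

lemma pos_def_diag:
  fixes Q :: "real mat"
  assumes Q: "Q \<in> carrier_mat p p" and pd: "pos_def_mat Q" and j: "j < p"
  shows "Q $$ (j, j) > 0"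
proof -
  define x :: "real vec" where "x = unit_vec p j"
  have x: "x \<in> carrier_vec p" by (simp add: x_def)
  have x0: "x \<noteq> 0\<^sub>v p"
  proof
    assume "x = 0\<^sub>v p"
    hence "x $ j = 0" using j by simp
    thus False using j by (simp add: x_def)
  qed
  have "x \<bullet> (Q *\<^sub>v x) > 0" using pd x x0 Q unfolding pos_def_mat_def by auto
  moreover have "x \<bullet> (Q *\<^sub>v x) = Q $$ (j, j)"
  proof -
    have "x \<bullet> (Q *\<^sub>v x) = (Q *\<^sub>v x) $ j" unfolding x_def using j Q by (subst scalar_prod_left_unit) auto
    also have "\<dots> = row Q j \<bullet> x" using j Q by simp
    also have "\<dots> = row Q j $ j" unfolding x_def using j Q by (subst scalar_prod_right_unit) auto
    also have "\<dots> = Q $$ (j, j)" using j Q by simp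
    finally show ?thesis .
  qed
  ultimately show ?thesis by simp
qed

theorem lemma3:
  fixes p m :: nat and \<beta> :: "real vec" and \<sigma> :: real and Mset :: "nat set" and \<alpha>0 :: real
    and X :: "nat \<Rightarrow> real mat" and Q :: "real mat"
    and \<Omega> :: "'a measure" and W :: "'a \<Rightarrow> real" and Z :: "nat \<Rightarrow> 'a \<Rightarrow> real"
    and \<epsilon> :: "nat \<Rightarrow> 'a \<Rightarrow> nat \<Rightarrow> real"
  assumes "p \<ge> 1"
    and "\<beta> \<in> carrier_vec p"
    and "\<sigma> > 0"
    and "Mset \<subseteq> {0..<p}" and "card Mset = m"
    and "0 < \<alpha>0" and "\<alpha>0 < 1"
    and X_dim: "\<And>n. X n \<in> carrier_mat n p"
    and "Q \<in> carrier_mat p p" and "pos_def_mat Q"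
    and X_lim: "\<And>i j. i < p \<Longrightarrow> j < p \<Longrightarrow>
       (\<lambda>n. (1 / real n) * ((X n)\<^sup>T * X n) $$ (i, j)) \<longlonglongrightarrow> Q $$ (i, j)"
    and "prob_space \<Omega>"
    and eps_indep: "\<And>n. prob_space.indep_vars \<Omega> (\<lambda>_. borel) (\<lambda>i \<omega>. \<epsilon> n \<omega> i) {..<n}"
    and eps_distr: "\<And>n i. i < n \<Longrightarrow> distributed \<Omega> lborel (\<lambda>\<omega>. \<epsilon> n \<omega> i) (normal_density 0 \<sigma>)"
    and W_distr: "distr \<Omega> borel W = chi_sq_measure m"
    and Z_distr: "\<And>n. n > p + 1 \<Longrightarrow> distr \<Omega> borel (Z n) = chi_sq_measure (n - p - 1)"
    and indep: "\<And>n. n > p + 1 \<Longrightarrow> prob_space.indep_vars \<Omega> (\<lambda>_. borel)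
       (\<lambda>k \<omega>. if k = (0::nat) then W \<omega> else if k = 1 then Z n \<omega>
              else (let Y = X n *\<^sub>v \<beta> + vec n (\<epsilon> n \<omega>)
                    in - (Y \<bullet> (proj_mat (drop_cols (X n) Mset) *\<^sub>v Y))))
       {0, 1, 2}"
  shows "\<exists>\<delta> > 0. \<exists>N > 0. \<forall>n > N.
     measure \<Omega> {\<omega> \<in> space \<Omega>.
        W \<omega> - (real p / (real n - real p - 1) * F_quantile p (n - p - 1) (1 - \<alpha>0)) * Z n \<omega>
        \<ge> (let Y = X n *\<^sub>v \<beta> + vec n (\<epsilon> n \<omega>)
           in - (Y \<bullet> (proj_mat (drop_cols (X n) Mset) *\<^sub>v Y))) / \<sigma>\<^sup>2} \<ge> \<delta>"
proof -
  interpret prob_space \<Omega> by (rule assms(12))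
  note X_dim = assms(8)
  define js where "js = jsel Mset p"
  define r where "r = length js"
  define A where "A = (\<lambda>n. drop_cols (X n) Mset)"
  define G where "G = (\<lambda>n. (A n)\<^sup>T * A n)"
  define Qs where "Qs = mat r r (\<lambda>(i, j). Q $$ (js ! i, js ! j))"
  define Yv where "Yv = (\<lambda>n \<omega>. X n *\<^sub>v \<beta> + vec n (\<epsilon> n \<omega>))"
  define dn where "dn = (\<lambda>n \<omega>. let Y = X n *\<^sub>v \<beta> + vec n (\<epsilon> n \<omega>)
                    in - (Y \<bullet> (proj_mat (drop_cols (X n) Mset) *\<^sub>v Y)))"
  define Xf where "Xf = (\<lambda>n k \<omega>. if k = (0::nat) then W \<omega> else if k = 1 then Z n \<omega> else dn n \<omega>)"
  have Ac: "A n \<in> carrier_mat n r" for n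
    using drop_cols_carrier[OF X_dim[of n]] by (simp add: A_def r_def js_def)
  have Gc: "G n \<in> carrier_mat r r" for n using Ac[of n] by (simp add: G_def)
  have jsp: "js ! i < p" if "i < r" for i using jsel_props(2)[of i Mset p] that by (simp add: r_def js_def)
  have Gent: "G n $$ (i, j) = ((X n)\<^sup>T * X n) $$ (js ! i, js ! j)" if "i < r" "j < r" for n i j
    using gram_drop_cols[OF X_dim[of n]] that by (simp add: G_def A_def js_def r_def)
  have Yc: "Yv n \<omega> \<in> carrier_vec n" for n \<omega>
    using X_dim[of n] assms(2) by (simp add: Yv_def)
  have dn_eq: "dn n \<omega> = - (Yv n \<omega> \<bullet> (proj_mat (A n) *\<^sub>v Yv n \<omega>))" for n \<omega>
    by (simp add: dn_def Yv_def A_def Let_def)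
  have indep': "indep_vars (\<lambda>_. borel) (Xf n) {0, 1, 2}" if "n > p + 1" for n
    using assms(17)[OF that] unfolding Xf_def dn_def by simp
  have rv: "random_variable borel W" "random_variable borel (Z n)" "random_variable borel (dn n)"
    if "n > p + 1" for n
    using indep'[OF that] unfolding indep_vars_def Xf_def by auto
  have Wm[measurable]: "W \<in> borel_measurable \<Omega>" using rv(1)[of "p + 2"] by simp
  have Gs_lim: "((\<lambda>n. det ((1 / real n) \<cdot>\<^sub>m G n)) \<longlongrightarrow> det Qs) sequentially"
  proof (rule det_tendsto)
    show "(1 / real n) \<cdot>\<^sub>m G n \<in> carrier_mat r r" for n using Gc[of n] by simp
    show "Qs \<in> carrier_mat r r" by (simp add: Qs_def)
    fix i j assume ij: "i < r" "j < r"
    have "((\<lambda>n. (1 / real n) * ((X n)\<^sup>T * X n) $$ (js ! i, js ! j)) \<longlongrightarrow> Q $$ (js ! i, js ! j)) sequentially"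
      using assms(11)[of "js ! i" "js ! j"] jsp ij by simp
    moreover have "((1 / real n) \<cdot>\<^sub>m G n) $$ (i, j) = (1 / real n) * ((X n)\<^sup>T * X n) $$ (js ! i, js ! j)" for n
      using Gc[of n] ij Gent[of i j n] by simp
    ultimately show "((\<lambda>n. ((1 / real n) \<cdot>\<^sub>m G n) $$ (i, j)) \<longlongrightarrow> Qs $$ (i, j)) sequentially"
      using ij by (simp add: Qs_def)
  qed
  have detQs: "det Qs \<noteq> 0"
    unfolding Qs_def r_def using det_sub_nonzero[OF assms(9) assms(10) jsel_props(1)[of Mset p]] jsel_props(2)[of _ Mset p]
    by (simp add: js_def)
  have ev_det: "\<forall>\<^sub>F n in sequentially. det (G n) \<noteq> 0"
  proof -
    have "\<forall>\<^sub>F n in sequentially. det ((1 / real n) \<cdot>\<^sub>m G n) \<noteq> 0"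
      by (rule tendsto_imp_eventually_ne[OF Gs_lim detQs])
    thus ?thesis by eventually_elim (use Gc in auto)
  qed
  have ev_diag: "\<forall>\<^sub>F n in sequentially. 0 < r \<longrightarrow> G n $$ (0, 0) > 0"
  proof (cases "0 < r")
    case True
    have q0: "Q $$ (js ! 0, js ! 0) > 0" by (rule pos_def_diag[OF assms(9) assms(10) jsp[OF True]])
    have "((\<lambda>n. (1 / real n) * ((X n)\<^sup>T * X n) $$ (js ! 0, js ! 0)) \<longlongrightarrow> Q $$ (js ! 0, js ! 0)) sequentially"
      using assms(11)[of "js ! 0" "js ! 0"] jsp[OF True] by simp
    hence "\<forall>\<^sub>F n in sequentially. (1 / real n) * ((X n)\<^sup>T * X n) $$ (js ! 0, js ! 0) > 0"
      using q0 by (rule order_tendstoD(1))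
    thus ?thesis
    proof eventually_elim
      case (elim n)
      hence "((X n)\<^sup>T * X n) $$ (js ! 0, js ! 0) > 0" by (simp add: zero_less_divide_iff)
      thus ?case using Gent[OF True True, of n] by simp
    qed
  qed simp
  define w where "w = (\<lambda>n. col (A n) 0)"
  have wc: "w n \<in> carrier_vec n" for n using Ac[of n] col_dim[of "A n" 0] by (simp add: w_def)
  have ev_LA: "\<forall>\<^sub>F n in sequentially. \<forall>\<omega>. dn n \<omega> \<le> 0 \<and>
      (0 < r \<longrightarrow> (w n \<bullet> Yv n \<omega>)\<^sup>2 \<le> (w n \<bullet> w n) * (- dn n \<omega>) \<and> w n \<bullet> w n > 0)"
    using ev_det ev_diag
  proof eventually_elim
    case (elim n)
    obtain B where B: "mat_inverse (G n) = Some B" "G n * B = 1\<^sub>m r" "B \<in> carrier_mat r r"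
      using mat_inverse_exists[OF Gc elim(1)] by blast
    have P: "proj_mat (A n) = A n * B * (A n)\<^sup>T"
      using B(1) by (simp add: proj_mat_def G_def)
    have GB: "((A n)\<^sup>T * A n) * B = 1\<^sub>m r" using B(2) by (simp add: G_def)
    have ww: "w n \<bullet> w n = G n $$ (0, 0)" if "0 < r"
      using Ac[of n] that by (simp add: G_def w_def)
    show ?case
    proof
      fix \<omega>
      note qf = quad_form[OF Ac[of n] B(3) GB Yc[of n \<omega>]]
      show "dn n \<omega> \<le> 0 \<and> (0 < r \<longrightarrow> (w n \<bullet> Yv n \<omega>)\<^sup>2 \<le> (w n \<bullet> w n) * (- dn n \<omega>) \<and> w n \<bullet> w n > 0)"
        using qf elim(2) ww unfolding dn_eq P w_def by auto
    qed
  qed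
  obtain C where evC: "\<forall>\<^sub>F b in sequentially. F_quantile p b (1 - \<alpha>0) \<le> C"
    using F_quantile_bound[OF assms(1) assms(6) assms(7)] by blast
  define K where "K = 2 * real p * max C 0"
  have K0: "K \<ge> 0" by (simp add: K_def)
  have evF: "\<forall>\<^sub>F n in sequentially. F_quantile p (n - p - 1) (1 - \<alpha>0) \<le> C"
  proof -
    obtain B0 where B0: "\<And>b. b \<ge> B0 \<Longrightarrow> F_quantile p b (1 - \<alpha>0) \<le> C"
      using evC by (auto simp: eventually_sequentially)
    show ?thesis unfolding eventually_sequentially
      by (rule exI[of _ "B0 + p + 1"]) (auto intro!: B0)
  qed
  have Wrv: "random_variable borel W" using rv(1)[of "p + 2"] by simp
  have PWeq: "measure \<Omega> (W -` S \<inter> space \<Omega>) = measure (chi_sq_measure m) S" if "S \<in> sets borel" for S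
  proof -
    have "measure \<Omega> (W -` S \<inter> space \<Omega>) = measure (distr \<Omega> borel W) S"
      by (rule measure_distr[symmetric]) (use that Wrv in auto)
    thus ?thesis using assms(15) by simp
  qed
  have sg2: "\<sigma>\<^sup>2 > 0" using assms(3) by simp
  have cases: "\<exists>A0 A2 \<delta>W \<delta>D. \<delta>W > 0 \<and> \<delta>D > 0 \<and> A0 \<in> sets borel \<and> A2 \<in> sets borel \<and>
      measure \<Omega> (W -` A0 \<inter> space \<Omega>) \<ge> \<delta>W \<and>
      (\<forall>\<^sub>F n in sequentially. measure \<Omega> (dn n -` A2 \<inter> space \<Omega>) \<ge> \<delta>D) \<and>
      (\<forall>x\<in>A0. \<forall>y\<in>A2. y / \<sigma>\<^sup>2 \<le> x - K)"
  proof (cases "m = 0")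
    case False
    hence m1: "m \<ge> 1" by simp
    have chiM: "chi_sq_measure m = density lborel (\<lambda>x. ennreal (chi_sq_density m x))"
      using False by (simp add: chi_sq_measure_def)
    have Pm: "prob_space (chi_sq_measure m)" using prob_space_distr[OF Wrv] assms(15) by simp
    define \<delta>W where "\<delta>W = measure (chi_sq_measure m) {K..}"
    have gm: "Gamma (real m / 2) > 0" using m1 by (intro Gamma_real_pos) simp
    have dW: "\<delta>W > 0" unfolding \<delta>W_def chiM
    proof (rule measure_density_pos_tail[of _ K 0])
      show "chi_sq_density m \<in> borel_measurable borel" by measurable
      fix x :: real assume "K < x" "0 < x"
      then show "0 < chi_sq_density m x" using gm by (simp add: chi_sq_density_def)
    next
      show "prob_space (density lborel (\<lambda>x. ennreal (chi_sq_density m x)))" using Pm chiM by simp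
    qed
    have PW: "measure \<Omega> (W -` {K..} \<inter> space \<Omega>) \<ge> \<delta>W" using PWeq[of "{K..}"] by (simp add: \<delta>W_def)
    have ev_np: "\<forall>\<^sub>F n in sequentially. n > p + 1" by (rule eventually_gt_at_top)
    have PD: "\<forall>\<^sub>F n in sequentially. measure \<Omega> (dn n -` {..0} \<inter> space \<Omega>) \<ge> 1"
      using ev_LA
    proof eventually_elim
      case (elim n)
      hence "dn n -` {..0} \<inter> space \<Omega> = space \<Omega>" by auto
      thus ?case by (simp add: prob_space)
    qed
    have AA: "\<forall>x\<in>{K..}. \<forall>y\<in>{..0::real}. y / \<sigma>\<^sup>2 \<le> x - K"
    proof (intro ballI)
      fix x y :: real assume "x \<in> {K..}" "y \<in> {..0::real}"
      hence "y / \<sigma>\<^sup>2 \<le> 0" "K \<le> x" using sg2 by (auto intro: divide_nonpos_pos)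
      thus "y / \<sigma>\<^sup>2 \<le> x - K" by simp
    qed
    have o: "(0::real) < 1" by simp
    show ?thesis
      by (rule exI[of _ "{K..}"], rule exI[of _ "{..0::real}"], rule exI[of _ \<delta>W], rule exI[of _ 1])
        (simp add: dW PW PD AA)
  next
    case True
    have Mfin: "finite Mset" using assms(4) by (rule finite_subset) simp
    have M0: "Mset = {}" using True assms(5) Mfin by simp
    have rp: "r = p" by (simp add: r_def js_def jsel_def M0)
    have r0: "0 < r" using rp assms(1) by simp
    define \<delta>0 where "\<delta>0 = measure (density lborel (\<lambda>x. ennreal (normal_density 0 \<sigma> x))) {\<sigma> * sqrt K..}"
    have d0: "\<delta>0 > 0" unfolding \<delta>0_def
    proof (rule measure_density_pos_tail[of _ _ 0])
      show "normal_density 0 \<sigma> \<in> borel_measurable borel" by measurable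
      fix x :: real show "0 < normal_density 0 \<sigma> x" using assms(3) by (rule normal_density_pos)
    next
      show "prob_space (density lborel (\<lambda>x. ennreal (normal_density 0 \<sigma> x)))"
        using prob_space_normal_density[OF assms(3)] by simp
    qed
    have PW: "measure \<Omega> (W -` {0..} \<inter> space \<Omega>) \<ge> 1"
      using PWeq[of "{0..}"] True by (simp add: chi_sq_measure_def measure_return)
    have ev_np: "\<forall>\<^sub>F n in sequentially. n > p + 1" by (rule eventually_gt_at_top)
    have PD: "\<forall>\<^sub>F n in sequentially. measure \<Omega> (dn n -` {..- (K * \<sigma>\<^sup>2)} \<inter> space \<Omega>) \<ge> \<delta>0"
      using ev_LA ev_np
    proof eventually_elim
      case (elim n)
      have dm: "dn n \<in> borel_measurable \<Omega>" using rv(3)[OF elim(2)] by simp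
      define ww where "ww = w n \<bullet> w n"
      have wwp: "ww > 0" using elim(1) r0 by (simp add: ww_def)
      define s where "s = sqrt ww"
      have sp: "s > 0" using wwp by (simp add: s_def)
      have ss: "s * s = ww" using wwp by (simp add: s_def)
      define u where "u = (\<lambda>i. w n $ i / s)"
      define c' where "c' = (w n \<bullet> (X n *\<^sub>v \<beta>)) / s"
      have wwsum: "ww = (\<Sum>i<n. (w n $ i)\<^sup>2)" unfolding ww_def sp_sum[OF wc[of n]] by (simp add: power2_eq_square)
      have usum: "(\<Sum>i<n. (u i)\<^sup>2) = 1"
      proof -
        have "(\<Sum>i<n. (u i)\<^sup>2) = (\<Sum>i<n. (w n $ i)\<^sup>2) / (s * s)"
          by (simp add: u_def power_divide sum_divide_distrib power2_eq_square)
        also have "\<dots> = 1" using ss wwsum wwp by simp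
        finally show ?thesis .
      qed
      have wY: "w n \<bullet> Yv n \<omega> = s * (c' + (\<Sum>i<n. u i * \<epsilon> n \<omega> i))" for \<omega>
      proof -
        have Xb: "X n *\<^sub>v \<beta> \<in> carrier_vec n" using X_dim[of n] assms(2) by simp
        have "w n \<bullet> Yv n \<omega> = w n \<bullet> (X n *\<^sub>v \<beta>) + w n \<bullet> vec n (\<epsilon> n \<omega>)"
          unfolding Yv_def by (rule scalar_prod_add_distrib[OF wc Xb]) simp
        also have "w n \<bullet> vec n (\<epsilon> n \<omega>) = (\<Sum>i<n. w n $ i * \<epsilon> n \<omega> i)"
          by (subst sp_sum[of _ n]) auto
        also have "(\<Sum>i<n. w n $ i * \<epsilon> n \<omega> i) = s * (\<Sum>i<n. u i * \<epsilon> n \<omega> i)"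
          using sp by (simp add: u_def sum_distrib_left)
        finally show ?thesis using sp by (simp add: c'_def distrib_left)
      qed
      have sub: "{\<omega> \<in> space \<Omega>. K * \<sigma>\<^sup>2 \<le> (c' + (\<Sum>i<n. u i * \<epsilon> n \<omega> i))\<^sup>2}
          \<subseteq> dn n -` {..- (K * \<sigma>\<^sup>2)} \<inter> space \<Omega>"
      proof (intro subsetI)
        fix \<omega> assume "\<omega> \<in> {\<omega> \<in> space \<Omega>. K * \<sigma>\<^sup>2 \<le> (c' + (\<Sum>i<n. u i * \<epsilon> n \<omega> i))\<^sup>2}"
        hence \<omega>: "\<omega> \<in> space \<Omega>" "K * \<sigma>\<^sup>2 \<le> (c' + (\<Sum>i<n. u i * \<epsilon> n \<omega> i))\<^sup>2" by auto
        have "(w n \<bullet> Yv n \<omega>)\<^sup>2 = ww * (c' + (\<Sum>i<n. u i * \<epsilon> n \<omega> i))\<^sup>2"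
          unfolding wY by (simp add: power_mult_distrib ss[symmetric] power2_eq_square)
        hence "ww * (K * \<sigma>\<^sup>2) \<le> (w n \<bullet> Yv n \<omega>)\<^sup>2" using \<omega>(2) wwp by simp
        also have "\<dots> \<le> ww * (- dn n \<omega>)" using elim(1) r0 by (simp add: ww_def)
        finally have "ww * (K * \<sigma>\<^sup>2) \<le> ww * (- dn n \<omega>)" .
        hence "K * \<sigma>\<^sup>2 \<le> - dn n \<omega>" using wwp by (rule mult_left_le_imp_le)
        thus "\<omega> \<in> dn n -` {..- (K * \<sigma>\<^sup>2)} \<inter> space \<Omega>" using \<omega>(1) by simp
      qed
      have "\<delta>0 \<le> measure \<Omega> {\<omega> \<in> space \<Omega>. K * \<sigma>\<^sup>2 \<le> (c' + (\<Sum>i<n. u i * \<epsilon> n \<omega> i))\<^sup>2}"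
        unfolding \<delta>0_def
        by (rule gauss_event[OF assms(12) assms(3) assms(13)[of n] assms(14) usum K0])
      also have "\<dots> \<le> measure \<Omega> (dn n -` {..- (K * \<sigma>\<^sup>2)} \<inter> space \<Omega>)"
        by (rule finite_measure_mono[OF sub]) (use dm in measurable)
      finally show ?case .
    qed
    have AA: "\<forall>x\<in>{0..}. \<forall>y\<in>{..- (K * \<sigma>\<^sup>2)}. y / \<sigma>\<^sup>2 \<le> x - K"
    proof (intro ballI)
      fix x y :: real assume "x \<in> {0..}" "y \<in> {..- (K * \<sigma>\<^sup>2)}"
      hence "y / \<sigma>\<^sup>2 \<le> - K" "0 \<le> x" using sg2 by (auto simp: divide_le_eq)
      thus "y / \<sigma>\<^sup>2 \<le> x - K" by simp
    qed
    have o: "(0::real) < 1" by simp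
    have s1: "{0::real..} \<in> sets borel" "{..- (K * \<sigma>\<^sup>2)} \<in> sets borel" by auto
    show ?thesis
      by (rule exI[of _ "{0::real..}"], rule exI[of _ "{..- (K * \<sigma>\<^sup>2)}"], rule exI[of _ 1], rule exI[of _ \<delta>0])
        (simp add: d0 PW PD AA)
  qed
  then obtain A0 A2 \<delta>W \<delta>D where dW: "\<delta>W > 0" and dD: "\<delta>D > 0" and A0: "A0 \<in> sets borel"
    and A2: "A2 \<in> sets borel" and PW: "measure \<Omega> (W -` A0 \<inter> space \<Omega>) \<ge> \<delta>W"
    and PD: "\<forall>\<^sub>F n in sequentially. measure \<Omega> (dn n -` A2 \<inter> space \<Omega>) \<ge> \<delta>D"
    and AA: "\<And>x y. x \<in> A0 \<Longrightarrow> y \<in> A2 \<Longrightarrow> y / \<sigma>\<^sup>2 \<le> x - K"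
    by blast
  have evall: "\<forall>\<^sub>F n in sequentially. F_quantile p (n - p - 1) (1 - \<alpha>0) \<le> C \<and>
      measure \<Omega> (dn n -` A2 \<inter> space \<Omega>) \<ge> \<delta>D"
    using evF PD by eventually_elim auto
  then obtain N0 where N0: "\<And>n. n \<ge> N0 \<Longrightarrow> F_quantile p (n - p - 1) (1 - \<alpha>0) \<le> C \<and>
      measure \<Omega> (dn n -` A2 \<inter> space \<Omega>) \<ge> \<delta>D"
    by (auto simp: eventually_sequentially)
  show ?thesis
  proof (intro exI[of _ "\<delta>W * (1/2) * \<delta>D"] conjI exI[of _ "N0 + p + 2"] allI impI)
    show "\<delta>W * (1/2) * \<delta>D > 0" using dW dD by simp
    show "N0 + p + 2 > 0" by simp
    fix n assume n: "n > N0 + p + 2"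
    have np: "n > p + 1" using n by simp
    have Nn: "F_quantile p (n - p - 1) (1 - \<alpha>0) \<le> C" "measure \<Omega> (dn n -` A2 \<inter> space \<Omega>) \<ge> \<delta>D"
      using N0[of n] n by auto
    define k where "k = n - p - 1"
    have k1: "k \<ge> 1" using np by (simp add: k_def)
    define cn where "cn = real p / (real n - real p - 1) * F_quantile p (n - p - 1) (1 - \<alpha>0)"
    define A1 where "A1 = {0..2 * real k}"
    define As where "As = (\<lambda>j::nat. if j = 0 then A0 else if j = 1 then A1 else A2)"
    note rvn = rv[OF np]
    have Zm[measurable]: "Z n \<in> borel_measurable \<Omega>" using rvn(2) by simp
    have dm[measurable]: "dn n \<in> borel_measurable \<Omega>" using rvn(3) by simp
    have "prob (\<Inter>j\<in>{0, 1, 2}. Xf n j -` As j \<inter> space \<Omega>) = (\<Prod>j\<in>{0, 1, 2}. prob (Xf n j -` As j \<inter> space \<Omega>))"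
      by (rule indep_varsD[OF indep'[OF np]]) (auto simp: As_def A1_def A0 A2)
    hence prodeq: "prob (W -` A0 \<inter> space \<Omega> \<inter> (Z n -` A1 \<inter> space \<Omega>) \<inter> (dn n -` A2 \<inter> space \<Omega>))
        = prob (W -` A0 \<inter> space \<Omega>) * prob (Z n -` A1 \<inter> space \<Omega>) * prob (dn n -` A2 \<inter> space \<Omega>)"
      by (simp add: Xf_def As_def Int_ac mult_ac)
    have PZ: "prob (Z n -` A1 \<inter> space \<Omega>) \<ge> 1/2"
    proof -
      have "prob (Z n -` A1 \<inter> space \<Omega>) = measure (distr \<Omega> borel (Z n)) A1"
        by (rule measure_distr[symmetric]) (auto simp: A1_def)
      also have "\<dots> = measure (chi_sq_measure k) A1" using assms(16)[OF np] by (simp add: k_def)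
      also have "\<dots> \<ge> 1/2" unfolding A1_def
      proof (rule chi_sq_half[OF k1])
        show "prob_space (chi_sq_measure k)"
          using prob_space_distr[OF rvn(2)] assms(16)[OF np] by (simp add: k_def)
      qed
      finally show ?thesis .
    qed
    have "\<delta>W * (1/2) * \<delta>D \<le> prob (W -` A0 \<inter> space \<Omega>) * prob (Z n -` A1 \<inter> space \<Omega>) * prob (dn n -` A2 \<inter> space \<Omega>)"
      using PW PZ Nn(2) dW dD by (intro mult_mono) auto
    also have "\<dots> = prob (W -` A0 \<inter> space \<Omega> \<inter> (Z n -` A1 \<inter> space \<Omega>) \<inter> (dn n -` A2 \<inter> space \<Omega>))"
      by (rule prodeq[symmetric])
    also have "\<dots> \<le> prob {\<omega> \<in> space \<Omega>. W \<omega> - cn * Z n \<omega> \<ge> dn n \<omega> / \<sigma>\<^sup>2}"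
    proof (rule finite_measure_mono)
      show "{\<omega> \<in> space \<Omega>. W \<omega> - cn * Z n \<omega> \<ge> dn n \<omega> / \<sigma>\<^sup>2} \<in> events" by measurable
      show "W -` A0 \<inter> space \<Omega> \<inter> (Z n -` A1 \<inter> space \<Omega>) \<inter> (dn n -` A2 \<inter> space \<Omega>)
          \<subseteq> {\<omega> \<in> space \<Omega>. W \<omega> - cn * Z n \<omega> \<ge> dn n \<omega> / \<sigma>\<^sup>2}"
      proof safe
        fix \<omega> assume \<omega>: "\<omega> \<in> space \<Omega>" "W \<omega> \<in> A0" "Z n \<omega> \<in> A1" "dn n \<omega> \<in> A2"
        have "cn * Z n \<omega> \<le> K"
          unfolding cn_def K_def
          by (rule cz_bound[OF np Nn(1)]) (use \<omega>(3) in \<open>auto simp: A1_def k_def\<close>)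
        moreover have "dn n \<omega> / \<sigma>\<^sup>2 \<le> W \<omega> - K" by (rule AA[OF \<omega>(2) \<omega>(4)])
        ultimately show "W \<omega> - cn * Z n \<omega> \<ge> dn n \<omega> / \<sigma>\<^sup>2" by simp
      qed
    qed
    finally show "measure \<Omega> {\<omega> \<in> space \<Omega>.
        W \<omega> - (real p / (real n - real p - 1) * F_quantile p (n - p - 1) (1 - \<alpha>0)) * Z n \<omega>
        \<ge> (let Y = X n *\<^sub>v \<beta> + vec n (\<epsilon> n \<omega>)
           in - (Y \<bullet> (proj_mat (drop_cols (X n) Mset) *\<^sub>v Y))) / \<sigma>\<^sup>2} \<ge> \<delta>W * (1/2) * \<delta>D"
      unfolding cn_def dn_def by simp
  qed
qed

end
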